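(* Let $\Omega\subset\mathbb{R}^{n+m}$ be a bounded open set, $p\in(1,\infty)$, and $0<s_0<s<1$. Then for every $u\in\widetilde{\mathcal W}^{s,p}(\Omega)$, \[ \frac{(1-s_0)[u]^p_{\mathcal W^{s_0,p}(\Omega)}}{2^{(1-s_0)p}\operatorname{diam}(\Omega)^{(s-s_0)p}}\le(1-s)[u]^p_{\mathcal W^{s,p}(\mathbb{R}^{n+m})}. \]
   Context: Points of $\mathbb{R}^{n+m}$ are $(x,y)$, $x\in\mathbb{R}^n$, $y\in\mathbb{R}^m$; $\Omega_y=\{x:(x,y)\in\Omega\}$, $\Omega_x=\{y:(x,y)\in\Omega\}$. For $r\in(0,1)$: $[u]^p_{\mathcal W^{r,p}(\Omega)}=\int_\Omega\int_{\Omega_y}\frac{|u(x,y)-u(z,y)|^p}{|x-z|^{n+rp}}dz\,dx\,dy+\int_\Omega\int_{\Omega_x}\frac{|u(x,y)-u(x,w)|^p}{|y-w|^{m+rp}}dw\,dx\,dy$, and $[u]^p_{\mathcal W^{r,p}(\mathbb{R}^{n+m})}$ is the same expression with all integrals over $\mathbb{R}^{n+m}$, $\mathbb{R}^n$, $\mathbb{R}^m$. $\widetilde{\mathcal W}^{s,p}(\Omega)$ is the set of $u\in L^p(\mathbb{R}^{n+m})$ with $[u]_{\mathcal W^{s,p}(\mathbb{R}^{n+m})}<\infty$ and $u\equiv0$ outside $\Omega$. *)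

theory Defs
  imports "HOL-Analysis.Analysis"
begin

text \<open>Points of R^(n+m) are pairs (x,y) with x :: 'a, y :: 'b, where 'a, 'b are
  Euclidean spaces of dimensions n = DIM('a) and m = DIM('b).\<close>

definition slice_y :: "('a \<times> 'b) set \<Rightarrow> 'b \<Rightarrow> 'a set" where
  "slice_y \<Omega> y = {x. (x, y) \<in> \<Omega>}"

definition slice_x :: "('a \<times> 'b) set \<Rightarrow> 'a \<Rightarrow> 'b set" where
  "slice_x \<Omega> x = {y. (x, y) \<in> \<Omega>}"

definition aniso_seminorm ::
  "('a::euclidean_space \<times> 'b::euclidean_space) set \<Rightarrow> real \<Rightarrow> real \<Rightarrow> ('a \<times> 'b \<Rightarrow> real) \<Rightarrow> ennreal" where
  "aniso_seminorm \<Omega> r p u =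
     (\<integral>\<^sup>+ w \<in> \<Omega>. (\<integral>\<^sup>+ z \<in> slice_y \<Omega> (snd w).
        ennreal (\<bar>u (fst w, snd w) - u (z, snd w)\<bar> powr p
                 / norm (fst w - z) powr (real DIM('a) + r * p)) \<partial>lborel) \<partial>lborel)
   + (\<integral>\<^sup>+ w \<in> \<Omega>. (\<integral>\<^sup>+ v \<in> slice_x \<Omega> (fst w).
        ennreal (\<bar>u (fst w, snd w) - u (fst w, v)\<bar> powr p
                 / norm (snd w - v) powr (real DIM('b) + r * p)) \<partial>lborel) \<partial>lborel)"

definition aniso_seminorm_full ::
  "real \<Rightarrow> real \<Rightarrow> ('a::euclidean_space \<times> 'b::euclidean_space \<Rightarrow> real) \<Rightarrow> ennreal" where
  "aniso_seminorm_full r p u = aniso_seminorm UNIV r p u"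

definition tildeW ::
  "real \<Rightarrow> real \<Rightarrow> ('a::euclidean_space \<times> 'b::euclidean_space) set \<Rightarrow> ('a \<times> 'b \<Rightarrow> real) set" where
  "tildeW s p \<Omega> = {u. u \<in> borel_measurable lborel
       \<and> (\<integral>\<^sup>+ w. ennreal (\<bar>u w\<bar> powr p) \<partial>lborel) < \<infinity>
       \<and> aniso_seminorm_full s p u < \<infinity>
       \<and> (\<forall>w. w \<notin> \<Omega> \<longrightarrow> u w = 0)}"

end

theory Submission
  imports Defs
begin

lemma nn_trans:
  fixes c :: "'a::euclidean_space"
  assumes [measurable]: "f \<in> borel_measurable borel"
  shows "(\<integral>\<^sup>+x. f x \<partial>lborel) = (\<integral>\<^sup>+x. f (c + x) \<partial>lborel)"
proof -
  have "(\<integral>\<^sup>+x. f (c + x) \<partial>lborel) = (\<integral>\<^sup>+x. f x \<partial>distr lborel borel ((+) c))"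
    by (subst nn_integral_distr) auto
  then show ?thesis by (simp add: lborel_distr_plus)
qed

lemma nn_scale:
  fixes c :: real
  assumes [measurable]: "f \<in> borel_measurable (borel :: 'a::euclidean_space measure)" and "c \<noteq> 0"
  shows "(\<integral>\<^sup>+x. f x \<partial>lborel) = ennreal (\<bar>c\<bar>^DIM('a)) * (\<integral>\<^sup>+x. f (c *\<^sub>R x) \<partial>lborel)"
  by (subst lborel_affine[OF assms(2), of 0])
     (simp add: nn_integral_density nn_integral_distr nn_integral_cmult)

lemma meas_pair:
  assumes "case_prod f \<in> borel_measurable (borel :: ('a::euclidean_space \<times> ('b::euclidean_space \<times> 'c::euclidean_space)) measure)"
  shows "case_prod f \<in> borel_measurable (lborel \<Otimes>\<^sub>M lborel :: ('a \<times> ('b \<times> 'c)) measure)"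
proof -
  have "sets (lborel \<Otimes>\<^sub>M lborel :: ('a \<times> ('b \<times> 'c)) measure) = sets (borel \<Otimes>\<^sub>M borel)"
    by (rule sets_pair_measure_cong) (rule sets_lborel)+
  also have "\<dots> = sets borel" by (simp only: borel_prod)
  finally have eq: "sets (lborel \<Otimes>\<^sub>M lborel :: ('a \<times> ('b \<times> 'c)) measure) = sets borel" .
  show ?thesis by (subst measurable_cong_sets[OF eq refl]) (rule assms)
qed

lemma meas_u: "u \<in> borel_measurable (borel :: ('a::euclidean_space \<times> 'b::euclidean_space) measure)
  \<Longrightarrow> u \<in> borel_measurable (borel \<Otimes>\<^sub>M borel)"
  by (metis borel_prod)

definition omg :: "('a::euclidean_space \<times> 'b::euclidean_space \<Rightarrow> real) \<Rightarrow> real \<Rightarrow> 'a \<Rightarrow> ennreal" where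
  "omg u p h = (\<integral>\<^sup>+ w. ennreal (\<bar>u w - u (fst w + h, snd w)\<bar> powr p) \<partial>lborel)"

lemma reform:
  fixes u :: "'a::euclidean_space \<times> 'b::euclidean_space \<Rightarrow> real"
  assumes um: "u \<in> borel_measurable borel" and [measurable]: "S \<in> sets borel"
  shows "(\<integral>\<^sup>+ w. (\<integral>\<^sup>+ z. indicator S (z - fst w) * ennreal (\<bar>u (fst w, snd w) - u (z, snd w)\<bar> powr p
                 / norm (fst w - z) powr e) \<partial>lborel) \<partial>lborel)
       = (\<integral>\<^sup>+ h. indicator S h * omg u p h * ennreal (1 / norm h powr e) \<partial>lborel)"
proof -
  note [measurable] = um
  have "(\<integral>\<^sup>+ z. indicator S (z - fst w) * ennreal (\<bar>u (fst w, snd w) - u (z, snd w)\<bar> powr p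
                 / norm (fst w - z) powr e) \<partial>lborel)
     = (\<integral>\<^sup>+ h. indicator S h * ennreal (1 / norm h powr e) * ennreal (\<bar>u w - u (fst w + h, snd w)\<bar> powr p) \<partial>lborel)" for w
  proof -
    have "(\<integral>\<^sup>+ z. indicator S (z - fst w) * ennreal (\<bar>u (fst w, snd w) - u (z, snd w)\<bar> powr p
                 / norm (fst w - z) powr e) \<partial>lborel)
       = (\<integral>\<^sup>+ h. indicator S (fst w + h - fst w) * ennreal (\<bar>u (fst w, snd w) - u (fst w + h, snd w)\<bar> powr p
                 / norm (fst w - (fst w + h)) powr e) \<partial>lborel)"
      by (rule nn_trans) measurable
    also have "\<dots> = (\<integral>\<^sup>+ h. indicator S h * ennreal (1 / norm h powr e) * ennreal (\<bar>u w - u (fst w + h, snd w)\<bar> powr p) \<partial>lborel)"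
      by (intro nn_integral_cong) (simp add: ennreal_mult'[symmetric] mult.commute mult.assoc norm_minus_commute)
    finally show ?thesis .
  qed
  then have "(\<integral>\<^sup>+ w. (\<integral>\<^sup>+ z. indicator S (z - fst w) * ennreal (\<bar>u (fst w, snd w) - u (z, snd w)\<bar> powr p
                 / norm (fst w - z) powr e) \<partial>lborel) \<partial>lborel)
     = (\<integral>\<^sup>+ w. (\<integral>\<^sup>+ h. indicator S h * ennreal (1 / norm h powr e) * ennreal (\<bar>u w - u (fst w + h, snd w)\<bar> powr p) \<partial>lborel) \<partial>lborel)"
    by simp
  also have "\<dots> = (\<integral>\<^sup>+ h. (\<integral>\<^sup>+ w. indicator S h * ennreal (1 / norm h powr e) * ennreal (\<bar>u w - u (fst w + h, snd w)\<bar> powr p) \<partial>lborel) \<partial>lborel)"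
  proof (intro lborel_pair.Fubini' meas_pair)
    have g: "(\<lambda>x::'a\<times>('a\<times>'b). u (fst (snd x) + fst x, snd (snd x))) \<in> borel_measurable borel"
      by (rule measurable_compose[OF borel_measurable_continuous_onI um]) (intro continuous_intros)
    have g2: "(\<lambda>x::'a\<times>('a\<times>'b). u (snd x)) \<in> borel_measurable borel"
      by (rule measurable_compose[OF borel_measurable_continuous_onI um]) (intro continuous_intros)
    have g3: "(\<lambda>x::'a\<times>('a\<times>'b). fst x) \<in> borel \<rightarrow>\<^sub>M borel"
      by (rule borel_measurable_continuous_onI) (intro continuous_intros)
    have S: "S \<in> sets borel" by fact
    have a: "(\<lambda>x. indicator S (fst x) :: ennreal) \<in> borel_measurable (borel :: ('a\<times>('a\<times>'b)) measure)"
      using measurable_compose[OF g3 borel_measurable_indicator[OF S]] .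
    have n: "(\<lambda>x::'a\<times>('a\<times>'b). norm (fst x)) \<in> borel_measurable borel"
      by (rule borel_measurable_continuous_onI) (intro continuous_intros)
    have b: "(\<lambda>x::'a\<times>('a\<times>'b). ennreal (1 / norm (fst x) powr e)) \<in> borel_measurable borel"
      by (intro measurable_compose[OF _ measurable_ennreal] borel_measurable_divide borel_measurable_const powr_real_measurable n)
    have c: "(\<lambda>x::'a\<times>('a\<times>'b). ennreal (\<bar>u (snd x) - u (fst (snd x) + fst x, snd (snd x))\<bar> powr p)) \<in> borel_measurable borel"
      by (intro measurable_compose[OF _ measurable_ennreal] powr_real_measurable borel_measurable_abs borel_measurable_diff borel_measurable_const g g2)
    show "(\<lambda>(h, w). indicator S h * ennreal (1 / norm h powr e) * ennreal (\<bar>u w - u (fst w + h, snd w)\<bar> powr p))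
       \<in> borel_measurable borel"
      unfolding case_prod_beta by (intro borel_measurable_times_ennreal a b c)
  qed
  also have "\<dots> = (\<integral>\<^sup>+ h. (indicator S h * ennreal (1 / norm h powr e)) * omg u p h \<partial>lborel)"
    unfolding omg_def
  proof (intro nn_integral_cong nn_integral_cmult)
    fix h :: 'a
    show "(\<lambda>w. ennreal (\<bar>u w - u (fst w + h, snd w)\<bar> powr p)) \<in> borel_measurable lborel"
      unfolding measurable_lborel2
      by (intro measurable_compose[OF _ measurable_ennreal] powr_real_measurable borel_measurable_abs
            borel_measurable_diff borel_measurable_const um
            measurable_compose[OF borel_measurable_continuous_onI um]) (intro continuous_intros)
  qed
  also have "\<dots> = (\<integral>\<^sup>+ h. indicator S h * omg u p h * ennreal (1 / norm h powr e) \<partial>lborel)"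
    by (intro nn_integral_cong) (simp only: mult_ac)
  finally show ?thesis .
qed

lemma meas_D:
  fixes u :: "'a::euclidean_space \<times> 'b::euclidean_space \<Rightarrow> real"
  assumes um: "u \<in> borel_measurable borel"
  shows "(\<lambda>x::'a\<times>('a\<times>'b). ennreal (\<bar>u (snd x) - u (fst (snd x) + fst x, snd (snd x))\<bar> powr p)) \<in> borel_measurable borel"
proof -
  have g: "(\<lambda>x::'a\<times>('a\<times>'b). u (fst (snd x) + fst x, snd (snd x))) \<in> borel_measurable borel"
    by (rule measurable_compose[OF borel_measurable_continuous_onI um]) (intro continuous_intros)
  have g2: "(\<lambda>x::'a\<times>('a\<times>'b). u (snd x)) \<in> borel_measurable borel"
    by (rule measurable_compose[OF borel_measurable_continuous_onI um]) (intro continuous_intros)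
  show ?thesis
    by (intro measurable_compose[OF _ measurable_ennreal] powr_real_measurable borel_measurable_abs borel_measurable_diff borel_measurable_const g g2)
qed

lemma meas_omg:
  fixes u :: "'a::euclidean_space \<times> 'b::euclidean_space \<Rightarrow> real"
  assumes um: "u \<in> borel_measurable borel"
  shows "omg u p \<in> borel_measurable borel"
proof -
  have "(\<lambda>h. \<integral>\<^sup>+ w. (\<lambda>h w. ennreal (\<bar>u w - u (fst w + h, snd w)\<bar> powr p)) h w \<partial>lborel) \<in> borel_measurable lborel"
    by (rule lborel.borel_measurable_nn_integral, rule meas_pair) (unfold case_prod_beta, rule meas_D[OF um])
  then show ?thesis unfolding omg_def[abs_def] by simp
qed

lemma powr_sum_le:
  fixes a b p :: real
  assumes "0 \<le> a" "0 \<le> b" "1 \<le> p"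
  shows "(a + b) powr p \<le> 2 powr (p - 1) * (a powr p + b powr p)"
proof (cases "a = 0 \<or> b = 0")
  case True
  have "1 \<le> 2 powr (p - 1)" using assms by (intro ge_one_powr_ge_zero) auto
  then show ?thesis using True assms
    by (auto simp: mult_le_cancel_right1 intro: order_trans[OF _ mult_right_mono[of 1]])
next
  case False
  then have ab: "0 < a" "0 < b" using assms by auto
  have "((1/2) * a + (1/2) * b) powr p \<le> (1/2) * a powr p + (1/2) * b powr p"
    using convex_onD[OF powr_convex[OF assms(3)], of "1/2" a b] ab by simp
  then have "((a + b) / 2) powr p \<le> (a powr p + b powr p) / 2" by (simp add: field_simps)
  moreover have "((a + b) / 2) powr p = (a + b) powr p / 2 powr p"
    using ab by (simp add: powr_divide)
  moreover have "2 powr p = 2 * 2 powr (p - 1)" by (simp add: powr_diff)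
  ultimately show ?thesis by (simp add: field_simps)
qed

lemma doubling:
  fixes u :: "'a::euclidean_space \<times> 'b::euclidean_space \<Rightarrow> real"
  assumes um: "u \<in> borel_measurable borel" and p: "1 \<le> p"
  shows "omg u p (2 *\<^sub>R h) \<le> ennreal (2 powr p) * omg u p h"
proof -
  define D where "D = (\<lambda>h w. ennreal (\<bar>u w - u (fst w + h, snd w)\<bar> powr p))"
  have mD: "D h \<in> borel_measurable borel" for h
    unfolding D_def
    by (intro measurable_compose[OF _ measurable_ennreal] powr_real_measurable borel_measurable_abs
            borel_measurable_diff borel_measurable_const um
            measurable_compose[OF borel_measurable_continuous_onI um]) (intro continuous_intros)
  have mD2: "(\<lambda>w. D h ((h, 0) + w)) \<in> borel_measurable borel"
    by (rule measurable_compose[OF borel_measurable_continuous_onI mD]) (intro continuous_intros)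
  have pw: "D (2 *\<^sub>R h) w \<le> ennreal (2 powr (p - 1)) * (D h w + D h ((h, 0) + w))" for w
  proof -
    have "\<bar>u w - u (fst w + 2 *\<^sub>R h, snd w)\<bar> \<le> \<bar>u w - u (fst w + h, snd w)\<bar> + \<bar>u (fst w + h, snd w) - u (fst w + 2 *\<^sub>R h, snd w)\<bar>"
      by linarith
    then have "\<bar>u w - u (fst w + 2 *\<^sub>R h, snd w)\<bar> powr p \<le> (\<bar>u w - u (fst w + h, snd w)\<bar> + \<bar>u (fst w + h, snd w) - u (fst w + 2 *\<^sub>R h, snd w)\<bar>) powr p"
      using p by (intro powr_mono2) auto
    also have "\<dots> \<le> 2 powr (p - 1) * (\<bar>u w - u (fst w + h, snd w)\<bar> powr p + \<bar>u (fst w + h, snd w) - u (fst w + 2 *\<^sub>R h, snd w)\<bar> powr p)"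
      using p by (intro powr_sum_le) auto
    finally have *: "\<bar>u w - u (fst w + 2 *\<^sub>R h, snd w)\<bar> powr p \<le> 2 powr (p - 1) * (\<bar>u w - u (fst w + h, snd w)\<bar> powr p + \<bar>u (fst w + h, snd w) - u (fst w + 2 *\<^sub>R h, snd w)\<bar> powr p)" .
    have e: "fst w + 2 *\<^sub>R h = h + fst w + h" by (simp add: scaleR_2 algebra_simps)
    have ew: "w + (h, 0) = (h + fst w, snd w)" by (simp add: prod_eq_iff)
    show ?thesis
      unfolding D_def using * 
      by (simp add: e ew ennreal_mult'[symmetric] ennreal_plus[symmetric] del: ennreal_plus add: add.commute)
  qed
  have "omg u p (2 *\<^sub>R h) = (\<integral>\<^sup>+ w. D (2 *\<^sub>R h) w \<partial>lborel)" by (simp add: omg_def D_def)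
  also have "\<dots> \<le> (\<integral>\<^sup>+ w. ennreal (2 powr (p - 1)) * (D h w + D h ((h, 0) + w)) \<partial>lborel)"
    by (intro nn_integral_mono pw)
  also have "\<dots> = ennreal (2 powr (p - 1)) * ((\<integral>\<^sup>+ w. D h w \<partial>lborel) + (\<integral>\<^sup>+ w. D h ((h, 0) + w) \<partial>lborel))"
    using mD mD2 by (simp add: nn_integral_cmult nn_integral_add)
  also have "(\<integral>\<^sup>+ w. D h ((h, 0) + w) \<partial>lborel) = (\<integral>\<^sup>+ w. D h w \<partial>lborel)"
    by (rule nn_trans[symmetric, OF mD])
  also have "ennreal (2 powr (p - 1)) * ((\<integral>\<^sup>+ w. D h w \<partial>lborel) + (\<integral>\<^sup>+ w. D h w \<partial>lborel))
      = ennreal (2 powr p) * omg u p h"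
  proof -
    have "ennreal (2 powr (p - 1)) * (x + x) = ennreal (2 powr p) * x" for x :: ennreal
    proof -
      have "x + x = ennreal 2 * x" by (simp add: mult_2)
      moreover have "2 powr p = 2 powr (p - 1) * 2" by (simp add: powr_diff)
      ultimately show ?thesis by (simp add: ennreal_mult' mult.assoc)
    qed
    then show ?thesis by (simp add: omg_def D_def)
  qed
  finally show ?thesis .
qed

definition kap :: "real \<Rightarrow> 'a::euclidean_space \<Rightarrow> ennreal" where
  "kap e h = ennreal (1 / norm h powr e)"

definition Phi :: "('a::euclidean_space \<times> 'b::euclidean_space \<Rightarrow> real) \<Rightarrow> real \<Rightarrow> real \<Rightarrow> 'a set \<Rightarrow> ennreal" where
  "Phi u p e S = (\<integral>\<^sup>+ h. indicator S h * omg u p h * kap e h \<partial>lborel)"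

lemma meas_kap: "kap e \<in> borel_measurable borel"
  unfolding kap_def[abs_def]
  by (intro measurable_compose[OF _ measurable_ennreal] borel_measurable_divide borel_measurable_const
      powr_real_measurable borel_measurable_norm)

lemma meas_Phi_integrand:
  fixes u :: "'a::euclidean_space \<times> 'b::euclidean_space \<Rightarrow> real"
  assumes um: "u \<in> borel_measurable borel" and S: "S \<in> sets borel"
  shows "(\<lambda>h. indicator S h * omg u p h * kap e h) \<in> borel_measurable borel"
  by (intro borel_measurable_times_ennreal borel_measurable_indicator S meas_omg um meas_kap)

lemma kap_scale: "kap e (2 *\<^sub>R h) = ennreal (2 powr (-e)) * kap e h"
proof (cases "h = 0")
  case True then show ?thesis by (simp add: kap_def)
next
  case False
  have "norm (2 *\<^sub>R h) powr e = 2 powr e * norm h powr e" by (simp add: powr_mult)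
  then show ?thesis unfolding kap_def
    by (simp add: ennreal_mult'[symmetric] powr_minus divide_simps)
qed

lemma scaling:
  fixes u :: "'a::euclidean_space \<times> 'b::euclidean_space \<Rightarrow> real"
  assumes um: "u \<in> borel_measurable borel" and p: "1 \<le> p" and R: "0 \<le> R"
  shows "Phi u p (real DIM('a) + t * p) (cball 0 R)
       \<le> ennreal (2 powr ((1 - t) * p)) * Phi u p (real DIM('a) + t * p) (cball 0 (R/2))"
proof -
  define e where "e = real DIM('a) + t * p"
  define f where "f = (\<lambda>h. indicator (cball 0 R) h * omg u p h * kap e h)"
  define g where "g = (\<lambda>h. indicator (cball (0::'a) (R/2)) h * omg u p h * kap e h)"
  have mf: "f \<in> borel_measurable borel" unfolding f_def by (intro meas_Phi_integrand um) auto
  have mg: "g \<in> borel_measurable borel" unfolding g_def by (intro meas_Phi_integrand um) auto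
  have pw: "f (2 *\<^sub>R h) \<le> (ennreal (2 powr p) * ennreal (2 powr (-e))) * g h" for h
  proof -
    have i: "indicator (cball 0 R) (2 *\<^sub>R h) = (indicator (cball (0::'a) (R/2)) h :: ennreal)"
      by (simp add: indicator_def)
    have "f (2 *\<^sub>R h) = indicator (cball (0::'a) (R/2)) h * omg u p (2 *\<^sub>R h) * (ennreal (2 powr (-e)) * kap e h)"
      unfolding f_def i kap_scale ..
    also have "\<dots> \<le> indicator (cball (0::'a) (R/2)) h * (ennreal (2 powr p) * omg u p h) * (ennreal (2 powr (-e)) * kap e h)"
      by (intro mult_right_mono mult_left_mono doubling um p) auto
    also have "\<dots> = (ennreal (2 powr p) * ennreal (2 powr (-e))) * g h"
      unfolding g_def by (simp only: mult_ac)
    finally show ?thesis .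
  qed
  have "Phi u p e (cball 0 R) = (\<integral>\<^sup>+ h. f h \<partial>lborel)" by (simp add: Phi_def f_def)
  also have "\<dots> = ennreal (\<bar>2\<bar>^DIM('a)) * (\<integral>\<^sup>+ h. f (2 *\<^sub>R h) \<partial>lborel)"
    by (rule nn_scale[OF mf]) simp
  also have "\<dots> \<le> ennreal (\<bar>2\<bar>^DIM('a)) * (\<integral>\<^sup>+ h. (ennreal (2 powr p) * ennreal (2 powr (-e))) * g h \<partial>lborel)"
    by (intro mult_left_mono nn_integral_mono pw) auto
  also have "\<dots> = (ennreal (\<bar>2\<bar>^DIM('a)) * (ennreal (2 powr p) * ennreal (2 powr (-e)))) * Phi u p e (cball 0 (R/2))"
    using mg by (simp add: nn_integral_cmult Phi_def g_def mult.assoc)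
  also have "ennreal (\<bar>2\<bar>^DIM('a)) * (ennreal (2 powr p) * ennreal (2 powr (-e))) = ennreal (2 powr ((1 - t) * p))"
  proof -
    have "(\<bar>2\<bar>^DIM('a)) * (2 powr p * 2 powr (-e)) = (2::real) powr (real DIM('a) + p + (-e))"
    proof -
      have a: "(2::real)^DIM('a) = 2 powr real DIM('a)" by (simp add: powr_realpow)
      show ?thesis by (simp add: a powr_diff powr_add powr_minus field_simps)
    qed
    also have "real DIM('a) + p + (-e) = (1 - t) * p" by (simp add: e_def algebra_simps)
    finally show ?thesis by (simp add: ennreal_mult'[symmetric] del: ennreal_numeral)
  qed
  finally show ?thesis unfolding e_def .
qed

lemma abel:
  fixes a t :: "nat \<Rightarrow> real"
  assumes tt: "\<And>k. t k = a k + t (Suc k)" and tQ: "\<And>k. t k \<le> Q * t (Suc k)"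
    and a0: "\<And>k. 0 \<le> a k" and r: "0 \<le> \<rho>" "\<rho> \<le> 1"
  shows "(Q - \<rho>) * (\<Sum>k<N. \<rho>^k * a k) + (Q - 1) * \<rho>^N * t N \<le> (Q - 1) * t 0"
proof (induction N)
  case 0 then show ?case by simp
next
  case (Suc N)
  have eq: "(Q - 1) * \<rho>^N * t N - ((Q - \<rho>) * (\<rho>^N * a N) + (Q - 1) * \<rho>^(Suc N) * t (Suc N))
      = \<rho>^N * (1 - \<rho>) * ((Q - 1) * t (Suc N) - a N)"
    by (subst tt[of N]) (simp add: algebra_simps)
  have "(Q - 1) * t (Suc N) - a N \<ge> 0" using tt[of N] tQ[of N] by (simp add: algebra_simps)
  then have "\<rho>^N * (1 - \<rho>) * ((Q - 1) * t (Suc N) - a N) \<ge> 0" using r by simp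
  then show ?case using Suc eq by (simp add: algebra_simps)
qed

lemma const_ineq:
  fixes p s s0 :: real
  assumes "0 < p" "s0 < s" "s < 1"
  shows "(1 - s0) * (2 powr ((1 - s) * p) - 1)
    \<le> (1 - s) * 2 powr ((1 - s0) * p) * (2 powr ((1 - s) * p) - 2 powr (- (s - s0) * p))"
proof -
  define X where "X = (1 - s) * p * ln 2"
  define Y where "Y = (1 - s0) * p * ln 2"
  have X0: "0 < X" using assms by (simp add: X_def)
  have e1: "2 powr ((1 - s) * p) = exp X" by (simp add: powr_def X_def)
  have e2: "2 powr ((1 - s0) * p) = exp Y" by (simp add: powr_def Y_def)
  have e3: "2 powr (- (s - s0) * p) = exp (X - Y)" by (simp add: powr_def X_def Y_def algebra_simps)
  have "exp Y * (exp X - exp (X - Y)) = exp X * (exp Y - 1)"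
    by (simp add: exp_diff algebra_simps)
  have h1: "exp X - 1 \<le> X * exp X"
  proof -
    have "1 - X \<le> exp (- X)" using exp_ge_add_one_self[of "-X"] by simp
    then have "(1 - X) * exp X \<le> exp (-X) * exp X" by (intro mult_right_mono) auto
    then show ?thesis by (simp add: exp_minus algebra_simps)
  qed
  have h2: "Y \<le> exp Y - 1" using exp_ge_add_one_self[of Y] by linarith
  have "(1 - s0) * (exp X - 1) \<le> (1 - s0) * (X * exp X)"
    using h1 assms by (intro mult_left_mono) auto
  also have "\<dots> = (1 - s) * exp X * Y" by (simp add: X_def Y_def algebra_simps)
  also have "\<dots> \<le> (1 - s) * exp X * (exp Y - 1)"
    using h2 assms by (intro mult_left_mono) auto
  also have "\<dots> = (1 - s) * (exp Y * (exp X - exp (X - Y)))"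
    by (simp add: exp_diff algebra_simps)
  finally show ?thesis unfolding e1 e2 e3 by (simp add: mult.assoc)
qed

definition Xp :: "('a::euclidean_space \<times> 'b::euclidean_space) set \<Rightarrow> real \<Rightarrow> real \<Rightarrow> ('a \<times> 'b \<Rightarrow> real) \<Rightarrow> ennreal" where
  "Xp \<Omega> r p u = (\<integral>\<^sup>+ w \<in> \<Omega>. (\<integral>\<^sup>+ z \<in> slice_y \<Omega> (snd w).
        ennreal (\<bar>u (fst w, snd w) - u (z, snd w)\<bar> powr p
                 / norm (fst w - z) powr (real DIM('a) + r * p)) \<partial>lborel) \<partial>lborel)"

lemma Xp_le_Phi:
  fixes u :: "'a::euclidean_space \<times> 'b::euclidean_space \<Rightarrow> real"
  assumes um: "u \<in> borel_measurable borel"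
    and bnd: "\<And>x z y. (x, y) \<in> \<Omega> \<Longrightarrow> (z, y) \<in> \<Omega> \<Longrightarrow> norm (x - z) \<le> d"
  shows "Xp \<Omega> r p u \<le> Phi u p (real DIM('a) + r * p) (cball 0 d)"
proof -
  define e where "e = real DIM('a) + r * p"
  define F where "F = (\<lambda>w z. ennreal (\<bar>u (fst w, snd w) - u (z, snd w)\<bar> powr p / norm (fst w - z) powr e))"
  have "Xp \<Omega> r p u = (\<integral>\<^sup>+ w. (\<integral>\<^sup>+ z. F w z * indicator (slice_y \<Omega> (snd w)) z \<partial>lborel) * indicator \<Omega> w \<partial>lborel)"
    by (simp add: Xp_def F_def e_def)
  also have "\<dots> \<le> (\<integral>\<^sup>+ w. (\<integral>\<^sup>+ z. indicator (cball 0 d) (z - fst w) * F w z \<partial>lborel) \<partial>lborel)"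
  proof (intro nn_integral_mono)
    fix w :: "'a \<times> 'b"
    show "(\<integral>\<^sup>+ z. F w z * indicator (slice_y \<Omega> (snd w)) z \<partial>lborel) * indicator \<Omega> w
        \<le> (\<integral>\<^sup>+ z. indicator (cball 0 d) (z - fst w) * F w z \<partial>lborel)"
    proof (cases "w \<in> \<Omega>")
      case False then show ?thesis by simp
    next
      case True
      have "(\<integral>\<^sup>+ z. F w z * indicator (slice_y \<Omega> (snd w)) z \<partial>lborel)
          \<le> (\<integral>\<^sup>+ z. indicator (cball 0 d) (z - fst w) * F w z \<partial>lborel)"
      proof (intro nn_integral_mono)
        fix z
        show "F w z * indicator (slice_y \<Omega> (snd w)) z \<le> indicator (cball 0 d) (z - fst w) * F w z"
        proof (cases "z \<in> slice_y \<Omega> (snd w)")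
          case False then show ?thesis by simp
        next
          case True
          then have "(z, snd w) \<in> \<Omega>" by (simp add: slice_y_def)
          moreover have "(fst w, snd w) \<in> \<Omega>" using \<open>w \<in> \<Omega>\<close> by simp
          ultimately have "norm (fst w - z) \<le> d" using bnd by blast
          then have "z - fst w \<in> cball 0 d" by (simp add: norm_minus_commute)
          then show ?thesis using True by simp
        qed
      qed
      then show ?thesis using True by simp
    qed
  qed
  also have "\<dots> = Phi u p e (cball 0 d)"
    unfolding F_def Phi_def kap_def by (rule reform[OF um]) simp
  finally show ?thesis by (simp add: e_def)
qed

lemma Xp_UNIV:
  fixes u :: "'a::euclidean_space \<times> 'b::euclidean_space \<Rightarrow> real"
  assumes um: "u \<in> borel_measurable borel"
  shows "Xp UNIV r p u = Phi u p (real DIM('a) + r * p) UNIV"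
proof -
  have "Xp UNIV r p u = (\<integral>\<^sup>+ w. (\<integral>\<^sup>+ z. indicator UNIV (z - fst w) * ennreal (\<bar>u (fst w, snd w) - u (z, snd w)\<bar> powr p
                 / norm (fst w - z) powr (real DIM('a) + r * p)) \<partial>lborel) \<partial>lborel)"
    by (simp add: Xp_def slice_y_def)
  also have "\<dots> = Phi u p (real DIM('a) + r * p) UNIV"
    unfolding Phi_def kap_def by (rule reform[OF um]) simp
  finally show ?thesis .
qed

lemma Phi_mono: "S \<subseteq> T \<Longrightarrow> Phi u p e S \<le> Phi u p e T"
  unfolding Phi_def
  by (intro nn_integral_mono mult_right_mono) (auto simp: indicator_def)

lemma Phi_split:
  fixes u :: "'a::euclidean_space \<times> 'b::euclidean_space \<Rightarrow> real"
  assumes um: "u \<in> borel_measurable borel" and R: "0 \<le> R"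
  shows "Phi u p e (cball 0 R) = Phi u p e (cball 0 R - cball 0 (R/2)) + Phi u p e (cball (0::'a) (R/2))"
proof -
  have "Phi u p e (cball 0 R) = (\<integral>\<^sup>+ h. indicator (cball 0 R - cball 0 (R/2)) h * omg u p h * kap e h
       + indicator (cball (0::'a) (R/2)) h * omg u p h * kap e h \<partial>lborel)"
    unfolding Phi_def
  proof (intro nn_integral_cong)
    fix h :: 'a
    show "indicator (cball 0 R) h * omg u p h * kap e h =
      indicator (cball 0 R - cball 0 (R / 2)) h * omg u p h * kap e h + indicator (cball 0 (R / 2)) h * omg u p h * kap e h"
      using R by (auto simp: indicator_def)
  qed
  also have "\<dots> = Phi u p e (cball 0 R - cball 0 (R/2)) + Phi u p e (cball (0::'a) (R/2))"
    unfolding Phi_def by (intro nn_integral_add) (auto intro!: meas_Phi_integrand um)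
  finally show ?thesis .
qed

lemma exists_ann:
  fixes x d :: real
  assumes "0 < x" "x \<le> d"
  shows "\<exists>k. d / 2^(Suc k) < x \<and> x \<le> d / 2^k"
proof -
  obtain n where n: "d / x < 2^n" using real_arch_pow[of 2 "d/x"] by auto
  have ex: "\<exists>n. d / 2^n < x"
    using n assms by (intro exI[of _ n]) (simp add: field_simps)
  define m where "m = (LEAST n. d / (2::real)^n < x)"
  have m: "d / 2^m < x" unfolding m_def by (rule LeastI_ex[OF ex])
  have "m \<noteq> 0"
  proof
    assume "m = 0" with m assms show False by simp
  qed
  then obtain k where k: "m = Suc k" by (cases m) auto
  have "\<not> d / 2^k < x" using not_less_Least[of k "\<lambda>n. d / (2::real)^n < x"] k unfolding m_def by simp
  then show ?thesis using m k by (intro exI[of _ k]) auto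
qed

lemma main_x:
  fixes u :: "'a::euclidean_space \<times> 'b::euclidean_space \<Rightarrow> real"
  assumes um: "u \<in> borel_measurable borel" and p: "1 < p"
    and s0: "0 < s0" and ss: "s0 < s" and s1: "s < 1" and d: "0 < d"
    and bnd: "\<And>x z y. (x, y) \<in> \<Omega> \<Longrightarrow> (z, y) \<in> \<Omega> \<Longrightarrow> norm (x - z) \<le> d"
  shows "ennreal ((1 - s0) / (2 powr ((1 - s0) * p) * d powr ((s - s0) * p))) * Xp \<Omega> s0 p u
         \<le> ennreal (1 - s) * Xp UNIV s p u"
proof -
  define e0 where "e0 = real DIM('a) + s0 * p"
  define e1 where "e1 = real DIM('a) + s * p"
  define ann where "ann k = cball (0::'a) (d/2^k) - cball 0 (d/2^Suc k)" for k :: nat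
  define T where "T k = Phi u p e1 (cball (0::'a) (d/2^k))" for k :: nat
  define A where "A k = Phi u p e1 (ann k)" for k
  define B where "B k = Phi u p e0 (ann k)" for k
  define Q where "Q = (2::real) powr ((1 - s) * p)"
  define \<rho> where "\<rho> = (2::real) powr (- (s - s0) * p)"
  define D where "D = d powr ((s - s0) * p)"
  define K where "K = (2::real) powr ((1 - s0) * p)"
  define Full where "Full = Xp UNIV s p u"
  have Q1: "1 \<le> Q" unfolding Q_def using p s1 by (intro ge_one_powr_ge_zero) auto
  have \<rho>0: "0 \<le> \<rho>" "\<rho> < 1" unfolding \<rho>_def using p ss by (auto intro!: powr_less_one simp: mult_less_0_iff)
  have D0: "0 < D" unfolding D_def using d by simp
  have K0: "0 < K" unfolding K_def by simp
  have TA: "T k = A k + T (Suc k)" for k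
  proof -
    have eqR: "d / 2^k / 2 = d / 2^Suc k" by simp
    show ?thesis unfolding T_def A_def ann_def
      using Phi_split[OF um, of "d/2^k" p e1] d by (simp only: eqR) simp
  qed
  have TQ: "T k \<le> ennreal Q * T (Suc k)" for k
  proof -
    have eqR: "d / 2^k / 2 = d / 2^Suc k" by simp
    show ?thesis unfolding T_def Q_def e1_def
      using scaling[OF um _ , of p "d/2^k" s] p d by (simp only: eqR) simp
  qed
  have TF: "T k \<le> Full" for k
    unfolding T_def Full_def Xp_UNIV[OF um] e1_def by (rule Phi_mono) simp
  have AT: "A k \<le> T k" for k using TA[of k] by simp
  have B_le: "B k \<le> ennreal (D * \<rho>^k) * A k" for k
  proof -
    have eqc: "(d / 2^k) powr ((s - s0) * p) = D * \<rho>^k"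
    proof -
      have e1: "(d / 2^k) powr ((s - s0) * p) = D / ((2::real)^k) powr ((s - s0) * p)"
        unfolding D_def using d by (simp add: powr_divide)
      have e2: "((2::real)^k) powr ((s - s0) * p) = 2 powr (real k * ((s - s0) * p))"
        by (simp add: powr_realpow[symmetric] powr_powr)
      have e3: "\<rho>^k = 2 powr (real k * (- (s - s0) * p))"
        unfolding \<rho>_def by (simp add: powr_power)
      have e4: "real k * (- (s - s0) * p) = - (real k * ((s - s0) * p))" by (simp add: algebra_simps)
      show ?thesis unfolding e1 e2 e3 e4 by (simp add: powr_minus divide_inverse)
    qed
    have "B k = (\<integral>\<^sup>+ h. indicator (ann k) h * omg u p h * kap e0 h \<partial>lborel)" by (simp add: B_def Phi_def)
    also have "\<dots> \<le> (\<integral>\<^sup>+ h. ennreal (D * \<rho>^k) * (indicator (ann k) h * omg u p h * kap e1 h) \<partial>lborel)"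
    proof (intro nn_integral_mono)
      fix h :: 'a
      show "indicator (ann k) h * omg u p h * kap e0 h \<le> ennreal (D * \<rho>^k) * (indicator (ann k) h * omg u p h * kap e1 h)"
      proof (cases "h \<in> ann k")
        case False then show ?thesis by simp
      next
        case True
        then have h1: "d / 2^Suc k < norm h" and h2: "norm h \<le> d / 2^k" by (auto simp: ann_def)
        have hpos: "0 < norm h" using h1 d by (smt (verit) divide_pos_pos zero_less_power)
        have "1 / norm h powr e0 = norm h powr ((s - s0) * p) * (1 / norm h powr e1)"
          using hpos by (simp add: e0_def e1_def powr_diff[symmetric] powr_minus[symmetric] divide_inverse
              powr_add[symmetric] algebra_simps)
        also have "\<dots> \<le> (d / 2^k) powr ((s - s0) * p) * (1 / norm h powr e1)"
          using h2 hpos ss p by (intro mult_right_mono powr_mono2) auto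
        finally have "kap e0 h \<le> ennreal (D * \<rho>^k) * kap e1 h"
          unfolding kap_def eqc
        proof -
          assume le: "1 / norm h powr e0 \<le> D * \<rho> ^ k * (1 / norm h powr e1)"
          have "ennreal (D * \<rho> ^ k) * ennreal (1 / norm h powr e1) = ennreal (D * \<rho> ^ k * (1 / norm h powr e1))"
            by (rule ennreal_mult[symmetric]) (use D0 \<rho>0 in auto)
          then show "ennreal (1 / norm h powr e0) \<le> ennreal (D * \<rho> ^ k) * ennreal (1 / norm h powr e1)"
            using le by (simp add: ennreal_leI)
        qed
        then have "omg u p h * kap e0 h \<le> omg u p h * (ennreal (D * \<rho>^k) * kap e1 h)"
          by (rule mult_left_mono) simp
        then show ?thesis using True by (simp add: mult_ac)
      qed
    qed
    also have "\<dots> = ennreal (D * \<rho>^k) * A k"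
      unfolding A_def Phi_def ann_def by (intro nn_integral_cmult) (auto intro!: meas_Phi_integrand um)
    finally show ?thesis .
  qed
  have Phi0: "Phi u p e0 (cball 0 d) \<le> (\<Sum>k. B k)"
  proof -
    have "Phi u p e0 (cball 0 d) \<le> (\<integral>\<^sup>+ h. (\<Sum>k. indicator (ann k) h * omg u p h * kap e0 h) \<partial>lborel)"
      unfolding Phi_def
    proof (intro nn_integral_mono)
      fix h :: 'a
      show "indicator (cball 0 d) h * omg u p h * kap e0 h \<le> (\<Sum>k. indicator (ann k) h * omg u p h * kap e0 h)"
      proof (cases "h \<in> cball 0 d \<and> h \<noteq> 0")
        case False
        then show ?thesis by (auto simp: kap_def)
      next
        case True
        then obtain k where k: "d / 2^(Suc k) < norm h" "norm h \<le> d / 2^k"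
          using exists_ann[of "norm h" d] by auto
        then have "h \<in> ann k" by (simp add: ann_def)
        then have "indicator (cball 0 d) h * omg u p h * kap e0 h = (\<lambda>k. indicator (ann k) h * omg u p h * kap e0 h) k"
          using True by simp
        also have "\<dots> \<le> (\<Sum>k. indicator (ann k) h * omg u p h * kap e0 h)"
          using sum_le_suminf[of "\<lambda>k. indicator (ann k) h * omg u p h * kap e0 h" "{k}"] by simp
        finally show ?thesis .
      qed
    qed
    also have "\<dots> = (\<Sum>k. B k)"
      unfolding B_def Phi_def ann_def by (intro nn_integral_suminf) (auto intro!: meas_Phi_integrand um)
    finally show ?thesis .
  qed
  have Xle: "Xp \<Omega> s0 p u \<le> Phi u p e0 (cball 0 d)"
    unfolding e0_def by (rule Xp_le_Phi[OF um bnd])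
  show ?thesis
  proof (cases "Full = top")
    case True
    then show ?thesis using s1 by (simp add: Full_def ennreal_mult_top)
  next
    case False
    define t where "t k = enn2real (T k)" for k
    define a where "a k = enn2real (A k)" for k
    have Tn: "T k \<noteq> top" for k using TF[of k] False by (metis top_unique)
    have An: "A k \<noteq> top" for k using AT[of k] Tn[of k] by (metis top_unique)
    have Tt: "T k = ennreal (t k)" for k
      unfolding t_def using Tn[of k] by (simp add: ennreal_enn2real_if)
    have Aa: "A k = ennreal (a k)" for k
      unfolding a_def using An[of k] by (simp add: ennreal_enn2real_if)
    have t0: "t k \<ge> 0" "a k \<ge> 0" for k by (simp_all add: t_def a_def)
    have tt: "t k = a k + t (Suc k)" for k
      using TA[of k] unfolding Tt Aa using t0 by (simp add: ennreal_plus[symmetric] del: ennreal_plus)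
    have tQ: "t k \<le> Q * t (Suc k)" for k
      using TQ[of k] unfolding Tt using t0 Q1 by (simp add: ennreal_mult'[symmetric])
    define c where "c = (Q - 1) / (Q - \<rho>)"
    have Qr: "0 < Q - \<rho>" using Q1 \<rho>0 by simp
    have partial: "(\<Sum>k<N. D * (\<rho>^k * a k)) \<le> D * (c * t 0)" for N
    proof -
      have "(Q - \<rho>) * (\<Sum>k<N. \<rho>^k * a k) + (Q - 1) * \<rho>^N * t N \<le> (Q - 1) * t 0"
        by (rule abel[where t=t and a=a and Q=Q], rule tt, rule tQ, rule t0(2)) (use \<rho>0 in linarith)+
      moreover have "0 \<le> (Q - 1) * \<rho>^N * t N" using Q1 \<rho>0 t0 by simp
      ultimately have "(Q - \<rho>) * (\<Sum>k<N. \<rho>^k * a k) \<le> (Q - 1) * t 0" by linarith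
      then have "(\<Sum>k<N. \<rho>^k * a k) \<le> c * t 0"
        using Qr unfolding c_def by (simp add: field_simps)
      then show ?thesis using D0 by (simp add: sum_distrib_left[symmetric])
    qed
    have "(\<Sum>k. B k) \<le> (\<Sum>k. ennreal (D * (\<rho>^k * a k)))"
    proof (intro suminf_le)
      fix k
      have "ennreal (D * \<rho>^k) * ennreal (a k) = ennreal (D * (\<rho>^k * a k))"
        by (subst ennreal_mult[symmetric]) (use D0 \<rho>0 t0 in \<open>auto simp: mult.assoc\<close>)
      then show "B k \<le> ennreal (D * (\<rho>^k * a k))" using B_le[of k] unfolding Aa by simp
    qed auto
    also have "\<dots> \<le> ennreal (D * (c * t 0))"
    proof (rule suminf_le_const)
      show "summable (\<lambda>k. ennreal (D * (\<rho>^k * a k)))" by (rule summableI)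
      fix N
      have "(\<Sum>k<N. ennreal (D * (\<rho>^k * a k))) = ennreal (\<Sum>k<N. D * (\<rho>^k * a k))"
        using D0 \<rho>0 t0 by (intro sum_ennreal) auto
      then show "(\<Sum>k<N. ennreal (D * (\<rho>^k * a k))) \<le> ennreal (D * (c * t 0))"
        using partial by (simp add: ennreal_leI)
    qed
    finally have SB: "(\<Sum>k. B k) \<le> ennreal (D * (c * t 0))" .
    have creal: "(1 - s0) / (K * D) * (D * (c * t 0)) \<le> (1 - s) * t 0"
    proof -
      have "(1 - s0) * (Q - 1) \<le> (1 - s) * K * (Q - \<rho>)"
        unfolding Q_def K_def \<rho>_def using const_ineq[of p s0 s] p ss s1 by simp
      then have "(1 - s0) / K * c \<le> 1 - s"
        unfolding c_def using K0 Qr by (simp add: field_simps)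
      then have "(1 - s0) / K * c * t 0 \<le> (1 - s) * t 0" using t0 by (intro mult_right_mono) auto
      moreover have "(1 - s0) / (K * D) * (D * (c * t 0)) = (1 - s0) / K * c * t 0"
        using D0 K0 by (simp add: field_simps)
      ultimately show ?thesis by simp
    qed
    have "ennreal ((1 - s0) / (2 powr ((1 - s0) * p) * d powr ((s - s0) * p))) * Xp \<Omega> s0 p u
        = ennreal ((1 - s0) / (K * D)) * Xp \<Omega> s0 p u" by (simp add: K_def D_def)
    also have "\<dots> \<le> ennreal ((1 - s0) / (K * D)) * ennreal (D * (c * t 0))"
      using Xle Phi0 SB by (intro mult_left_mono) auto
    also have "\<dots> = ennreal ((1 - s0) / (K * D) * (D * (c * t 0)))"
    proof (rule ennreal_mult[symmetric])
      show "0 \<le> (1 - s0) / (K * D)" using s0 ss s1 K0 D0 by simp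
      have "0 \<le> c" unfolding c_def using Q1 Qr by simp
      then show "0 \<le> D * (c * t 0)" using D0 t0 by simp
    qed
    also have "\<dots> \<le> ennreal ((1 - s) * t 0)" using creal by (rule ennreal_leI)
    also have "\<dots> = ennreal (1 - s) * T 0" unfolding Tt
      by (rule ennreal_mult) (use s1 t0 in auto)
    also have "\<dots> \<le> ennreal (1 - s) * Full" using TF by (intro mult_left_mono) auto
    finally show ?thesis by (simp add: Full_def)
  qed
qed

lemma meas_pair_gen:
  assumes "f \<in> borel_measurable (borel :: ('a::euclidean_space \<times> 'b::euclidean_space) measure)"
  shows "f \<in> borel_measurable (lborel \<Otimes>\<^sub>M lborel :: ('a \<times> 'b) measure)"
proof -
  have "sets (lborel \<Otimes>\<^sub>M lborel :: ('a \<times> 'b) measure) = sets (borel \<Otimes>\<^sub>M borel)"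
    by (rule sets_pair_measure_cong) (rule sets_lborel)+
  also have "\<dots> = sets borel" by (simp only: borel_prod)
  finally have eq: "sets (lborel \<Otimes>\<^sub>M lborel :: ('a \<times> 'b) measure) = sets borel" .
  show ?thesis by (subst measurable_cong_sets[OF eq refl]) (rule assms)
qed

lemma nn_swap:
  fixes H :: "'a::euclidean_space \<times> 'b::euclidean_space \<Rightarrow> ennreal"
  assumes H: "H \<in> borel_measurable borel"
  shows "(\<integral>\<^sup>+ w. H w \<partial>lborel) = (\<integral>\<^sup>+ w. H (snd w, fst w) \<partial>(lborel :: ('b \<times> 'a) measure))"
proof -
  have "(\<integral>\<^sup>+ w. H w \<partial>lborel) = (\<integral>\<^sup>+ w. H w \<partial>(lborel \<Otimes>\<^sub>M lborel))"
    by (simp only: lborel_prod)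
  also have "\<dots> = (\<integral>\<^sup>+ w. H w \<partial>(distr (lborel \<Otimes>\<^sub>M lborel) (lborel \<Otimes>\<^sub>M lborel) (\<lambda>(x, y). (y, x))))"
    by (subst lborel_pair.distr_pair_swap) (rule refl)
  also have "\<dots> = (\<integral>\<^sup>+ w. H ((\<lambda>(x, y). (y, x)) w) \<partial>(lborel \<Otimes>\<^sub>M lborel))"
    by (rule nn_integral_distr) (auto intro: measurable_pair_swap' meas_pair_gen H)
  also have "\<dots> = (\<integral>\<^sup>+ w. H (snd w, fst w) \<partial>(lborel :: ('b \<times> 'a) measure))"
    by (simp only: lborel_prod case_prod_beta)
  finally show ?thesis .
qed

definition Yp :: "('a::euclidean_space \<times> 'b::euclidean_space) set \<Rightarrow> real \<Rightarrow> real \<Rightarrow> ('a \<times> 'b \<Rightarrow> real) \<Rightarrow> ennreal" where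
  "Yp \<Omega> r p u = (\<integral>\<^sup>+ w \<in> \<Omega>. (\<integral>\<^sup>+ v \<in> slice_x \<Omega> (fst w).
        ennreal (\<bar>u (fst w, snd w) - u (fst w, v)\<bar> powr p
                 / norm (snd w - v) powr (real DIM('b) + r * p)) \<partial>lborel) \<partial>lborel)"

lemma aniso_split: "aniso_seminorm \<Omega> r p u = Xp \<Omega> r p u + Yp \<Omega> r p u"
  unfolding aniso_seminorm_def Xp_def Yp_def ..

lemma Yp_swap:
  fixes u :: "'a::euclidean_space \<times> 'b::euclidean_space \<Rightarrow> real"
  assumes um: "u \<in> borel_measurable borel" and Om: "\<Omega> \<in> sets borel"
  shows "Yp \<Omega> r p u = Xp {(y, x). (x, y) \<in> \<Omega>} r p (\<lambda>(y, x). u (x, y))"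
proof -
  define e where "e = real DIM('b) + r * p"
  define G where "G = (\<lambda>(w::'a\<times>'b) (v::'b). ennreal (\<bar>u (fst w, snd w) - u (fst w, v)\<bar> powr p / norm (snd w - v) powr e) * indicator \<Omega> (fst w, v))"
  define H where "H = (\<lambda>w. (\<integral>\<^sup>+ v. G w v \<partial>lborel) * indicator \<Omega> w)"
  have mG: "case_prod G \<in> borel_measurable (borel :: (('a\<times>'b)\<times>'b) measure)"
  proof -
    have g1: "(\<lambda>x::('a\<times>'b)\<times>'b. u (fst (fst x), snd (fst x))) \<in> borel_measurable borel"
      by (rule measurable_compose[OF borel_measurable_continuous_onI um]) (intro continuous_intros)
    have g2: "(\<lambda>x::('a\<times>'b)\<times>'b. u (fst (fst x), snd x)) \<in> borel_measurable borel"
      by (rule measurable_compose[OF borel_measurable_continuous_onI um]) (intro continuous_intros)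
    have g3: "(\<lambda>x::('a\<times>'b)\<times>'b. norm (snd (fst x) - snd x)) \<in> borel_measurable borel"
      by (rule borel_measurable_continuous_onI) (intro continuous_intros)
    have g4: "(\<lambda>x::('a\<times>'b)\<times>'b. (fst (fst x), snd x)) \<in> borel \<rightarrow>\<^sub>M borel"
      by (rule borel_measurable_continuous_onI) (intro continuous_intros)
    have g5: "(\<lambda>x::('a\<times>'b)\<times>'b. indicator \<Omega> (fst (fst x), snd x) :: ennreal) \<in> borel_measurable borel"
      using measurable_compose[OF g4 borel_measurable_indicator[OF Om]] .
    show ?thesis unfolding G_def case_prod_beta
      by (intro borel_measurable_times_ennreal g5 measurable_compose[OF _ measurable_ennreal]
          borel_measurable_divide powr_real_measurable borel_measurable_abs borel_measurable_diff
          borel_measurable_const g1 g2 g3)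
  qed
  have mH: "H \<in> borel_measurable borel"
  proof -
    have "(\<lambda>w. \<integral>\<^sup>+ v. G w v \<partial>lborel) \<in> borel_measurable (lborel :: ('a\<times>'b) measure)"
      by (rule lborel.borel_measurable_nn_integral, rule meas_pair_gen, rule mG)
    then show ?thesis unfolding H_def
      by (intro borel_measurable_times_ennreal borel_measurable_indicator Om) simp_all
  qed
  have "Yp \<Omega> r p u = (\<integral>\<^sup>+ w. H w \<partial>lborel)"
    unfolding Yp_def H_def G_def e_def
    by (intro nn_integral_cong arg_cong2[where f="(*)"] refl) (auto simp: slice_x_def indicator_def)
  also have "\<dots> = (\<integral>\<^sup>+ w. H (snd w, fst w) \<partial>lborel)" by (rule nn_swap[OF mH])
  also have "\<dots> = Xp {(y, x). (x, y) \<in> \<Omega>} r p (\<lambda>(y, x). u (x, y))"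
    unfolding Xp_def H_def G_def e_def
    by (intro nn_integral_cong arg_cong2[where f="(*)"] refl) (auto simp: slice_y_def indicator_def)
  finally show ?thesis .
qed

theorem lemma4p5:
  fixes \<Omega> :: "('a::euclidean_space \<times> 'b::euclidean_space) set"
    and p s\<^sub>0 s :: real and u :: "'a \<times> 'b \<Rightarrow> real"
  assumes "bounded \<Omega>" and "open \<Omega>"
    and "1 < p" and "0 < s\<^sub>0" and "s\<^sub>0 < s" and "s < 1"
    and "u \<in> tildeW s p \<Omega>"
  shows "ennreal ((1 - s\<^sub>0) / (2 powr ((1 - s\<^sub>0) * p) * diameter \<Omega> powr ((s - s\<^sub>0) * p)))
           * aniso_seminorm \<Omega> s\<^sub>0 p u
         \<le> ennreal (1 - s) * aniso_seminorm_full s p u"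
proof -
  define d where "d = diameter \<Omega>"
  have um: "u \<in> borel_measurable borel" using assms(7) by (simp add: tildeW_def)
  have Om: "\<Omega> \<in> sets borel" using assms(2) by simp
  show ?thesis
  proof (cases "d = 0")
    case True
    then show ?thesis using assms(3,5) by (simp add: d_def)
  next
    case False
    have d0: "0 < d" using False diameter_ge_0[OF assms(1)] unfolding d_def by linarith
    have bnd: "norm (x - z) \<le> d" if "(x, y) \<in> \<Omega>" "(z, y) \<in> \<Omega>" for x z y
    proof -
      have "dist (x, y) (z, y) \<le> d" unfolding d_def by (rule diameter_bounded_bound[OF assms(1) that])
      then show ?thesis by (simp add: dist_Pair_Pair dist_norm)
    qed
    define \<Omega>' where "\<Omega>' = {(y, x). (x, y) \<in> \<Omega>}"
    define u' where "u' = (\<lambda>(y, x). u (x, y))"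
    have um': "u' \<in> borel_measurable borel"
      unfolding u'_def case_prod_beta
      by (rule measurable_compose[OF borel_measurable_continuous_onI um]) (intro continuous_intros)
    have bnd': "norm (x - z) \<le> d" if "(x, y) \<in> \<Omega>'" "(z, y) \<in> \<Omega>'" for x z y
    proof -
      have "(y, x) \<in> \<Omega>" "(y, z) \<in> \<Omega>" using that by (auto simp: \<Omega>'_def)
      then have "dist (y, x) (y, z) \<le> d" unfolding d_def by (rule diameter_bounded_bound[OF assms(1)])
      then show ?thesis by (simp add: dist_Pair_Pair dist_norm)
    qed
    define C where "C = ennreal ((1 - s\<^sub>0) / (2 powr ((1 - s\<^sub>0) * p) * d powr ((s - s\<^sub>0) * p)))"
    have X: "C * Xp \<Omega> s\<^sub>0 p u \<le> ennreal (1 - s) * Xp UNIV s p u"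
      unfolding C_def by (rule main_x[OF um assms(3-6) d0 bnd])
    have "Yp \<Omega> s\<^sub>0 p u = Xp \<Omega>' s\<^sub>0 p u'" unfolding \<Omega>'_def u'_def by (rule Yp_swap[OF um Om])
    moreover have "Yp UNIV s p u = Xp UNIV s p u'"
      using Yp_swap[OF um, of UNIV s p] unfolding u'_def by simp
    moreover have "C * Xp \<Omega>' s\<^sub>0 p u' \<le> ennreal (1 - s) * Xp UNIV s p u'"
      unfolding C_def by (rule main_x[OF um' assms(3-6) d0 bnd'])
    ultimately have Y: "C * Yp \<Omega> s\<^sub>0 p u \<le> ennreal (1 - s) * Yp UNIV s p u" by simp
    have "C * aniso_seminorm \<Omega> s\<^sub>0 p u = C * Xp \<Omega> s\<^sub>0 p u + C * Yp \<Omega> s\<^sub>0 p u"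
      by (simp add: aniso_split distrib_left)
    also have "\<dots> \<le> ennreal (1 - s) * Xp UNIV s p u + ennreal (1 - s) * Yp UNIV s p u"
      by (rule add_mono[OF X Y])
    also have "\<dots> = ennreal (1 - s) * aniso_seminorm_full s p u"
      by (simp add: aniso_seminorm_full_def aniso_split distrib_left)
    finally show ?thesis by (simp add: C_def d_def)
  qed
qed

end
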